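(* Let $\mathbb{F}_d$ be a field with the discrete topology, let $G$ be an ample Hausdorff groupoid, and let $\sigma\colon G^{(2)} \to \mathbb{F}_d^\times$ be a continuous $2$-cocycle. Let $\Gamma$ be a discrete group with identity $e$, and let $c\colon G \to \Gamma$ be a continuous groupoid homomorphism such that the subgroupoid $G_e := c^{-1}(e)$ is effective. Let $Q$ be a $\Gamma$-graded ring and $\pi\colon A_{\mathbb{F}_d}(G,\sigma) \to Q$ a graded ring homomorphism. Then $\pi$ is injective if and only if $\pi(1_K) \neq 0$ for every nonempty compact open subset $K$ of $G^{(0)}$.
   Context: Groupoids are locally compact Hausdorff topological groupoids; $G$ is ample if it has a basis of compact open bisections; a groupoid $H$ is effective if the interior of $\{\gamma\in H : r(\gamma) = s(\gamma)\}$ equals $H^{(0)}$. A continuous $2$-cocycle is a continuous (locally constant) $\sigma\colon G^{(2)} \to \mathbb{F}_d^\times$ with $\sigma(\alpha,\beta)\sigma(\alpha\beta,\gamma) = \sigma(\alpha,\beta\gamma)\sigma(\beta,\gamma)$ and $\sigma(r(\gamma),\gamma)=1=\sigma(\gamma,s(\gamma))$. $A_{\mathbb{F}_d}(G,\sigma)$ is the algebra of locally constant compactly supported $f\colon G\to\mathbb{F}_d$ with multiplication $(fg)(\gamma) = \sum_{\alpha\beta=\gamma}\sigma(\alpha,\beta)f(\alpha)g(\beta)$. It is $\Gamma$-graded with homogeneous components $A_{\mathbb{F}_d}(G,\sigma)_\gamma = \{f : \{f\neq 0\}\subseteq c^{-1}(\gamma)\}$. A $\Gamma$-graded ring $Q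 = \bigoplus_{\gamma\in\Gamma} Q_\gamma$ has additive subgroups $Q_\gamma$ with $Q_\zeta Q_\eta \subseteq Q_{\zeta\eta}$; a graded homomorphism $\pi$ satisfies $\pi(A_{\mathbb{F}_d}(G,\sigma)_\gamma)\subseteq Q_\gamma$ for all $\gamma$. $1_K$ denotes the indicator function of $K$. *)

theory Defs
  imports "HOL-Analysis.Analysis"
begin

text \<open>A groupoid is modelled on a type 'g (all elements of the type are arrows), with
 range map r, source map s, partial multiplication m (meaningful on composable pairs)
 and inverse i.\<close>

definition comp_pairs :: "('g \<Rightarrow> 'g) \<Rightarrow> ('g \<Rightarrow> 'g) \<Rightarrow> ('g \<times> 'g) set" where
  "comp_pairs r s = {(a, b). s a = r b}"

definition unit_space :: "('g \<Rightarrow> 'g) \<Rightarrow> 'g set" where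
  "unit_space r = {x. r x = x}"

definition groupoid :: "('g \<Rightarrow> 'g) \<Rightarrow> ('g \<Rightarrow> 'g) \<Rightarrow> ('g \<Rightarrow> 'g \<Rightarrow> 'g) \<Rightarrow> ('g \<Rightarrow> 'g) \<Rightarrow> bool" where
  "groupoid r s m i \<longleftrightarrow>
     (\<forall>a b. s a = r b \<longrightarrow> r (m a b) = r a \<and> s (m a b) = s b) \<and>
     (\<forall>a b c. s a = r b \<and> s b = r c \<longrightarrow> m (m a b) c = m a (m b c)) \<and>
     (\<forall>x. m (r x) x = x \<and> m x (s x) = x) \<and>
     (\<forall>x. r (s x) = s x \<and> s (r x) = r x) \<and>
     (\<forall>x. r (i x) = s x \<and> s (i x) = r x) \<and>
     (\<forall>x. m (i x) x = s x \<and> m x (i x) = r x)"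

text \<open>Locally compact Hausdorff topological groupoid (Hausdorff via the class t2_space).\<close>
definition lch_top_groupoid ::
  "('g::t2_space \<Rightarrow> 'g) \<Rightarrow> ('g \<Rightarrow> 'g) \<Rightarrow> ('g \<Rightarrow> 'g \<Rightarrow> 'g) \<Rightarrow> ('g \<Rightarrow> 'g) \<Rightarrow> bool" where
  "lch_top_groupoid r s m i \<longleftrightarrow>
     groupoid r s m i \<and>
     continuous_on (comp_pairs r s) (\<lambda>(a, b). m a b) \<and>
     continuous_on UNIV i \<and>
     locally compact (UNIV :: 'g set)"

definition open_bisection :: "('g::topological_space \<Rightarrow> 'g) \<Rightarrow> ('g \<Rightarrow> 'g) \<Rightarrow> 'g set \<Rightarrow> bool" where
  "open_bisection r s B \<longleftrightarrow> open B \<and>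
     (\<exists>g. homeomorphism B (r ` B) r g) \<and> openin (top_of_set (unit_space r)) (r ` B) \<and>
     (\<exists>g. homeomorphism B (s ` B) s g) \<and> openin (top_of_set (unit_space r)) (s ` B)"

definition ample :: "('g::topological_space \<Rightarrow> 'g) \<Rightarrow> ('g \<Rightarrow> 'g) \<Rightarrow> bool" where
  "ample r s \<longleftrightarrow> topological_basis {B. compact B \<and> open_bisection r s B}"

definition interior_in :: "'a::topological_space set \<Rightarrow> 'a set \<Rightarrow> 'a set" where
  "interior_in H A = \<Union>{U. openin (top_of_set H) U \<and> U \<subseteq> A}"

definition effective_sub :: "('g::topological_space \<Rightarrow> 'g) \<Rightarrow> ('g \<Rightarrow> 'g) \<Rightarrow> 'g set \<Rightarrow> bool" where
  "effective_sub r s H \<longleftrightarrow>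
     interior_in H {x \<in> H. r x = s x} = H \<inter> unit_space r"

text \<open>Continuity into a discrete space = local constancy.\<close>
definition locally_constant_on :: "'a::topological_space set \<Rightarrow> ('a \<Rightarrow> 'b) \<Rightarrow> bool" where
  "locally_constant_on S f \<longleftrightarrow>
     (\<forall>x\<in>S. \<exists>U. openin (top_of_set S) U \<and> x \<in> U \<and> (\<forall>y\<in>U. f y = f x))"

definition cont_2cocycle ::
  "('g::topological_space \<Rightarrow> 'g) \<Rightarrow> ('g \<Rightarrow> 'g) \<Rightarrow> ('g \<Rightarrow> 'g \<Rightarrow> 'g) \<Rightarrow> ('g \<Rightarrow> 'g \<Rightarrow> 'k::field) \<Rightarrow> bool" where
  "cont_2cocycle r s m \<sigma> \<longleftrightarrow>
     locally_constant_on (comp_pairs r s) (\<lambda>(a, b). \<sigma> a b) \<and>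
     (\<forall>(a, b)\<in>comp_pairs r s. \<sigma> a b \<noteq> 0) \<and>
     (\<forall>a b c. s a = r b \<and> s b = r c \<longrightarrow>
        \<sigma> a b * \<sigma> (m a b) c = \<sigma> a (m b c) * \<sigma> b c) \<and>
     (\<forall>x. \<sigma> (r x) x = 1 \<and> \<sigma> x (s x) = 1)"

definition cont_hom ::
  "('g::topological_space \<Rightarrow> 'g) \<Rightarrow> ('g \<Rightarrow> 'g) \<Rightarrow> ('g \<Rightarrow> 'g \<Rightarrow> 'g) \<Rightarrow> ('g \<Rightarrow> 'c::group_add) \<Rightarrow> bool" where
  "cont_hom r s m c \<longleftrightarrow> locally_constant_on UNIV c \<and>
     (\<forall>a b. s a = r b \<longrightarrow> c (m a b) = c a + c b)"

definition steinberg :: "('g::topological_space \<Rightarrow> 'k::field) set" where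
  "steinberg = {f. locally_constant_on UNIV f \<and> compact (closure {x. f x \<noteq> 0})}"

definition twisted_conv ::
  "('g \<Rightarrow> 'g) \<Rightarrow> ('g \<Rightarrow> 'g) \<Rightarrow> ('g \<Rightarrow> 'g \<Rightarrow> 'g) \<Rightarrow> ('g \<Rightarrow> 'g \<Rightarrow> 'k::field)
     \<Rightarrow> ('g \<Rightarrow> 'k) \<Rightarrow> ('g \<Rightarrow> 'k) \<Rightarrow> 'g \<Rightarrow> 'k" where
  "twisted_conv r s m \<sigma> f g x =
     (\<Sum>(a, b)\<in>{(a, b). s a = r b \<and> m a b = x \<and> f a \<noteq> 0 \<and> g b \<noteq> 0}. \<sigma> a b * f a * g b)"

definition steinberg_hom_component :: "('g \<Rightarrow> 'c) \<Rightarrow> 'c \<Rightarrow> ('g::topological_space \<Rightarrow> 'k::field) set" where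
  "steinberg_hom_component c \<gamma> = {f \<in> steinberg. {x. f x \<noteq> 0} \<subseteq> c -` {\<gamma>}}"

text \<open>Gamma-graded ring (Gamma written additively, identity 0): internal direct sum of
 additive subgroups Qg with Qg z * Qg h \<subseteq> Qg (z + h).\<close>
definition graded_ring :: "('c::group_add \<Rightarrow> 'q::ring set) \<Rightarrow> bool" where
  "graded_ring Qg \<longleftrightarrow>
     (\<forall>\<gamma>. 0 \<in> Qg \<gamma> \<and> (\<forall>x\<in>Qg \<gamma>. \<forall>y\<in>Qg \<gamma>. x + y \<in> Qg \<gamma>) \<and> (\<forall>x\<in>Qg \<gamma>. - x \<in> Qg \<gamma>)) \<and>
     (\<forall>\<zeta> \<eta>. \<forall>x\<in>Qg \<zeta>. \<forall>y\<in>Qg \<eta>. x * y \<in> Qg (\<zeta> + \<eta>)) \<and>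
     (\<forall>q. \<exists>!h::'c \<Rightarrow> 'q. finite {\<gamma>. h \<gamma> \<noteq> 0} \<and> (\<forall>\<gamma>. h \<gamma> \<in> Qg \<gamma>) \<and>
           q = (\<Sum>\<gamma>\<in>{\<gamma>. h \<gamma> \<noteq> 0}. h \<gamma>))"

definition graded_ring_hom ::
  "('g::topological_space \<Rightarrow> 'g) \<Rightarrow> ('g \<Rightarrow> 'g) \<Rightarrow> ('g \<Rightarrow> 'g \<Rightarrow> 'g) \<Rightarrow> ('g \<Rightarrow> 'g \<Rightarrow> 'k::field)
    \<Rightarrow> ('g \<Rightarrow> 'c::group_add) \<Rightarrow> ('c \<Rightarrow> 'q::ring set) \<Rightarrow> (('g \<Rightarrow> 'k) \<Rightarrow> 'q) \<Rightarrow> bool" where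
  "graded_ring_hom r s m \<sigma> c Qg \<pi> \<longleftrightarrow>
     (\<forall>f\<in>steinberg. \<forall>g\<in>steinberg. \<pi> (\<lambda>x. f x + g x) = \<pi> f + \<pi> g \<and>
         \<pi> (twisted_conv r s m \<sigma> f g) = \<pi> f * \<pi> g) \<and>
     (\<forall>\<gamma>. \<forall>f\<in>steinberg_hom_component c \<gamma>. \<pi> f \<in> Qg \<gamma>)"

end

theory Submission
  imports Defs
begin


lemma openin_UNIV_iff: "openin (top_of_set UNIV) U \<longleftrightarrow> open U"
  by (simp add: openin_open)

lemma lc_UNIV_iff: "locally_constant_on UNIV f \<longleftrightarrow> (\<forall>x. \<exists>U. open U \<and> x \<in> U \<and> (\<forall>y\<in>U. f y = f x))"
  unfolding locally_constant_on_def openin_UNIV_iff by blast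

lemma lc_open_fiber:
  assumes "locally_constant_on UNIV f" shows "open {x. f x = v}"
proof -
  have "\<forall>x\<in>{x. f x = v}. \<exists>T. open T \<and> x \<in> T \<and> T \<subseteq> {x. f x = v}"
  proof
    fix x assume x: "x \<in> {x. f x = v}"
    obtain U where "open U" "x \<in> U" "\<forall>y\<in>U. f y = f x"
      using assms unfolding lc_UNIV_iff by blast
    then show "\<exists>T. open T \<and> x \<in> T \<and> T \<subseteq> {x. f x = v}"
      using x by blast
  qed
  then show ?thesis using open_subopen by blast
qed

lemma lc_open_nz:
  assumes "locally_constant_on UNIV f" shows "open {x. f x \<noteq> v}"
proof -
  have "\<forall>x\<in>{x. f x \<noteq> v}. \<exists>T. open T \<and> x \<in> T \<and> T \<subseteq> {x. f x \<noteq> v}"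
  proof
    fix x assume x: "x \<in> {x. f x \<noteq> v}"
    obtain U where "open U" "x \<in> U" "\<forall>y\<in>U. f y = f x"
      using assms unfolding lc_UNIV_iff by blast
    moreover have "U \<subseteq> {x. f x \<noteq> v}"
    proof
      fix y assume "y \<in> U"
      then have "f y = f x" using \<open>\<forall>y\<in>U. f y = f x\<close> by blast
      then show "y \<in> {x. f x \<noteq> v}" using x by simp
    qed
    ultimately show "\<exists>T. open T \<and> x \<in> T \<and> T \<subseteq> {x. f x \<noteq> v}" by blast
  qed
  then show ?thesis using open_subopen by blast
qed

lemma lc_closed_nz:
  assumes "locally_constant_on UNIV f" shows "closed {x. f x \<noteq> v}"
proof -
  have "{x. f x \<noteq> v} = - {x. f x = v}" by blast
  then show ?thesis using lc_open_fiber[OF assms, of v] by (simp only: closed_Compl)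
qed

lemma lc_comb:
  assumes "locally_constant_on UNIV f" "locally_constant_on UNIV g"
  shows "locally_constant_on UNIV (\<lambda>x. F (f x) (g x))"
  unfolding lc_UNIV_iff
proof
  fix x :: 'a
  obtain U where U: "open U" "x \<in> U" "\<forall>y\<in>U. f y = f x"
    using assms(1) unfolding lc_UNIV_iff by blast
  obtain V where V: "open V" "x \<in> V" "\<forall>y\<in>V. g y = g x"
    using assms(2) unfolding lc_UNIV_iff by blast
  have "open (U \<inter> V)" using U V by blast
  moreover have "\<forall>y\<in>U \<inter> V. F (f y) (g y) = F (f x) (g x)"
  proof
    fix y assume y: "y \<in> U \<inter> V"
    have "f y = f x" "g y = g x" using U(3) V(3) y by blast+
    then show "F (f y) (g y) = F (f x) (g x)" by (simp only:)
  qed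
  ultimately show "\<exists>W. open W \<and> x \<in> W \<and> (\<forall>y\<in>W. F (f y) (g y) = F (f x) (g x))"
    using U V by blast
qed

lemma lc_const: "locally_constant_on UNIV (\<lambda>x. v)"
  unfolding lc_UNIV_iff by blast

lemma lc_clopen_if:
  assumes "open C" "closed C" "locally_constant_on UNIV f" "locally_constant_on UNIV g"
  shows "locally_constant_on UNIV (\<lambda>x. if x \<in> C then f x else g x)"
  unfolding lc_UNIV_iff
proof
  fix x :: 'a
  obtain U where U: "open U" "x \<in> U" "\<forall>y\<in>U. f y = f x"
    using assms(3) unfolding lc_UNIV_iff by blast
  obtain V where V: "open V" "x \<in> V" "\<forall>y\<in>V. g y = g x"
    using assms(4) unfolding lc_UNIV_iff by blast
  show "\<exists>W. open W \<and> x \<in> W \<and> (\<forall>y\<in>W. (if y \<in> C then f y else g y) = (if x \<in> C then f x else g x))"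
  proof (cases "x \<in> C")
    case True
    have "open (U \<inter> C)" using U assms(1) by blast
    moreover have "\<forall>y\<in>U \<inter> C. (if y \<in> C then f y else g y) = (if x \<in> C then f x else g x)"
    proof
      fix y assume y: "y \<in> U \<inter> C"
      have "f y = f x" using U(3) y by blast
      then show "(if y \<in> C then f y else g y) = (if x \<in> C then f x else g x)" using y True by (simp only: if_True IntD2)
    qed
    ultimately show ?thesis using U True by blast
  next
    case False
    have "open (V - C)" using V assms(2) by blast
    moreover have "\<forall>y\<in>V - C. (if y \<in> C then f y else g y) = (if x \<in> C then f x else g x)"
    proof
      fix y assume y: "y \<in> V - C"
      have "g y = g x" "y \<notin> C" using V(3) y by blast+
      then show "(if y \<in> C then f y else g y) = (if x \<in> C then f x else g x)" using False by (simp only: if_False)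
    qed
    ultimately show ?thesis using V False by blast
  qed
qed

lemma lc_compose:
  assumes "locally_constant_on S f" "continuous_on UNIV \<phi>" "\<And>x. \<phi> x \<in> S"
  shows "locally_constant_on UNIV (\<lambda>x. f (\<phi> x))"
  unfolding lc_UNIV_iff
proof
  fix x
  obtain U where U: "openin (top_of_set S) U" "\<phi> x \<in> U" "\<forall>y\<in>U. f y = f (\<phi> x)"
    using assms(1) assms(3) unfolding locally_constant_on_def by blast
  then obtain Ob where Ob: "open Ob" "U = S \<inter> Ob" by (auto simp: openin_open)
  have "open (\<phi> -` Ob \<inter> UNIV)" using assms(2) Ob(1) continuous_on_open_vimage[of UNIV \<phi>] by blast
  then have "open (\<phi> -` Ob)" by simp
  moreover have "x \<in> \<phi> -` Ob" using U Ob by blast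
  moreover have "\<forall>y\<in>\<phi> -` Ob. f (\<phi> y) = f (\<phi> x)" using U Ob assms(3) by blast
  ultimately show "\<exists>W. open W \<and> x \<in> W \<and> (\<forall>y\<in>W. f (\<phi> y) = f (\<phi> x))" by blast
qed



locale gsetup =
  fixes r s :: "'g::t2_space \<Rightarrow> 'g" and m :: "'g \<Rightarrow> 'g \<Rightarrow> 'g" and i :: "'g \<Rightarrow> 'g"
    and \<sigma> :: "'g \<Rightarrow> 'g \<Rightarrow> 'k::field"
    and c :: "'g \<Rightarrow> 'c::group_add"
    and Qg :: "'c \<Rightarrow> 'q::ring set"
    and \<pi> :: "('g \<Rightarrow> 'k) \<Rightarrow> 'q"
  assumes LG: "lch_top_groupoid r s m i"
    and AM: "ample r s"
    and CC: "cont_2cocycle r s m \<sigma>"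
    and CH: "cont_hom r s m c"
    and EF: "effective_sub r s (c -` {0})"
    and GR: "graded_ring Qg"
    and GH: "graded_ring_hom r s m \<sigma> c Qg \<pi>"
begin

lemma grp: "groupoid r s m i" using LG unfolding lch_top_groupoid_def by blast

lemma r_m: "s a = r b \<Longrightarrow> r (m a b) = r a" using grp unfolding groupoid_def by blast
lemma s_m: "s a = r b \<Longrightarrow> s (m a b) = s b" using grp unfolding groupoid_def by blast
lemma assoc: "s a = r b \<Longrightarrow> s b = r c' \<Longrightarrow> m (m a b) c' = m a (m b c')"
  using grp unfolding groupoid_def by blast
lemma m_r: "m (r x) x = x" using grp unfolding groupoid_def by blast
lemma m_s: "m x (s x) = x" using grp unfolding groupoid_def by blast
lemma r_s: "r (s x) = s x" using grp unfolding groupoid_def by blast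
lemma s_r: "s (r x) = r x" using grp unfolding groupoid_def by blast
lemma r_i: "r (i x) = s x" using grp unfolding groupoid_def by blast
lemma s_i: "s (i x) = r x" using grp unfolding groupoid_def by blast
lemma m_i_l: "m (i x) x = s x" using grp unfolding groupoid_def by blast
lemma m_i_r: "m x (i x) = r x" using grp unfolding groupoid_def by blast

lemma r_r: "r (r x) = r x" by (metis r_s s_r)
lemma s_s: "s (s x) = s x" by (metis r_s s_r)
lemma unit_s: "r u = u \<Longrightarrow> s u = u" by (metis s_r)

lemma cancel_inv:
  assumes "s a = r b" "r (m a b) = m a b" shows "b = i a"
proof -
  have "b = m (r b) b" by (simp add: m_r)
  also have "\<dots> = m (m (i a) a) b" using assms(1) by (simp add: m_i_l)
  also have "\<dots> = m (i a) (m a b)" using assms(1) by (simp add: assoc s_i)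
  also have "m a b = s (i a)" using assms by (metis r_m s_i)
  also have "m (i a) (s (i a)) = i a" by (rule m_s)
  finally show ?thesis .
qed

lemma i_i: "i (i y) = y"
proof -
  have "y = i (i y)"
    by (rule cancel_inv) (simp_all add: s_i m_i_l r_s)
  then show ?thesis by simp
qed

lemma unit_left: "r u = u \<Longrightarrow> s u = r b \<Longrightarrow> m u b = b"
  by (metis m_r unit_s)
lemma unit_right: "r u = u \<Longrightarrow> s a = u \<Longrightarrow> m a u = a"
  by (metis m_s)

lemma c_m: "s a = r b \<Longrightarrow> c (m a b) = c a + c b"
  using CH unfolding cont_hom_def by blast

lemma c_unit: assumes "r u = u" shows "c u = 0"
proof -
  have "m u u = u" using assms by (metis unit_left unit_s)
  then have "c u = c u + c u" using c_m[of u u] assms unit_s by metis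
  then have "c u + c u = c u + 0" by simp
  then show ?thesis by (rule add_left_imp_eq)
qed

lemma c_inv: "c (i y) + c y = 0"
  by (metis c_m c_unit m_i_l s_i r_s)

lemma c_lc: "locally_constant_on UNIV c" using CH unfolding cont_hom_def by blast

lemma i_cont: "continuous_on UNIV i" using LG unfolding lch_top_groupoid_def by blast
lemma m_cont: "continuous_on (comp_pairs r s) (\<lambda>(a, b). m a b)"
  using LG unfolding lch_top_groupoid_def by blast

lemma r_cont: "continuous_on UNIV r"
proof -
  have "continuous_on UNIV (\<lambda>x. (\<lambda>(a, b). m a b) (x, i x))"
    by (rule continuous_on_compose2[OF m_cont])
       (auto intro!: continuous_intros i_cont simp: comp_pairs_def r_i)
  then show ?thesis by (simp add: m_i_r)
qed

lemma s_cont: "continuous_on UNIV s"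
proof -
  have "continuous_on UNIV (\<lambda>x. (\<lambda>(a, b). m a b) (i x, x))"
    by (rule continuous_on_compose2[OF m_cont])
       (auto intro!: continuous_intros i_cont simp: comp_pairs_def s_i)
  then show ?thesis by (simp add: m_i_l)
qed

lemma cp_closed: "closed (comp_pairs r s)"
proof -
  have "closed {p. s (fst p) = r (snd p)}"
    by (rule closed_Collect_eq) (auto intro!: continuous_on_compose2[OF s_cont] continuous_on_compose2[OF r_cont] continuous_intros)
  moreover have "comp_pairs r s = {p. s (fst p) = r (snd p)}" by (auto simp: comp_pairs_def)
  ultimately show ?thesis by simp
qed

lemma basis: "topological_basis {B. compact B \<and> open_bisection r s B}"
  using AM unfolding ample_def by blast

lemma basisE:
  assumes "open O'" "x \<in> O'"
  obtains B where "compact B" "open_bisection r s B" "x \<in> B" "B \<subseteq> O'"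
proof -
  obtain B' where "B' \<in> {B. compact B \<and> open_bisection r s B}" "x \<in> B'" "B' \<subseteq> O'"
    by (rule topological_basisE[OF basis assms])
  then show ?thesis by (intro that[of B']) auto
qed

lemma bis_open: "open_bisection r s B \<Longrightarrow> open B" unfolding open_bisection_def by blast

lemma bis_hom: assumes "open_bisection r s B"
  obtains g where "homeomorphism B (r ` B) r g" "openin (top_of_set (unit_space r)) (r ` B)"
  using assms unfolding open_bisection_def by blast

lemma bis_inj: "open_bisection r s B \<Longrightarrow> x \<in> B \<Longrightarrow> y \<in> B \<Longrightarrow> r x = r y \<Longrightarrow> x = y"
  by (metis bis_hom homeomorphism_def)

lemma U0_open: "open (unit_space r)"
  unfolding open_subopen[of "unit_space r"]
proof
  fix x assume x: "x \<in> unit_space r"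
  obtain B where B: "compact B" "open_bisection r s B" "x \<in> B"
    using basisE[of UNIV x] by blast
  have "open (r -` B \<inter> UNIV)" using r_cont bis_open[OF B(2)] continuous_on_open_vimage[of UNIV r] by blast
  then have o: "open (B \<inter> r -` B)" using bis_open[OF B(2)] by auto
  have "B \<inter> r -` B \<subseteq> unit_space r"
  proof
    fix y assume "y \<in> B \<inter> r -` B"
    then have "r y = y" using bis_inj[OF B(2), of "r y" y] r_r by auto
    then show "y \<in> unit_space r" by (simp add: unit_space_def)
  qed
  moreover have "x \<in> B \<inter> r -` B" using x B(3) by (simp add: unit_space_def)
  ultimately show "\<exists>T. open T \<and> x \<in> T \<and> T \<subseteq> unit_space r" using o by blast
qed

lemma U0_closed: "closed (unit_space r)"
proof -
  have "closed {x. r x = id x}" by (rule closed_Collect_eq) (auto intro: r_cont continuous_on_id)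
  then show ?thesis by (simp add: unit_space_def)
qed

lemma c_fib_open: "open (c -` {v})"
  using lc_open_fiber[OF c_lc, of v] by (simp add: vimage_def)
lemma c_fib_closed: "closed (c -` {v})"
proof -
  have "c -` {v} = - {x. c x \<noteq> v}" by auto
  then show ?thesis using lc_open_nz[OF c_lc, of v] by (simp add: closed_Compl)
qed

lemma r_img_open: "open_bisection r s B \<Longrightarrow> open (r ` B)"
  by (metis bis_hom U0_open openin_open_trans)

end


lemma st_iff: "(f::'g::t2_space \<Rightarrow> 'k::field) \<in> steinberg \<longleftrightarrow> locally_constant_on UNIV f \<and> compact {x. f x \<noteq> 0}"
  unfolding steinberg_def using lc_closed_nz[of f 0] closure_closed by fastforce

lemma compact_closed_sub: "compact S \<Longrightarrow> closed T \<Longrightarrow> T \<subseteq> S \<Longrightarrow> compact T"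
  using compact_Int_closed[of S T] by (simp add: Int_absorb1)

lemma st_ind:
  assumes "compact K" "open K"
  shows "(\<lambda>x. if x \<in> K then a else 0) \<in> (steinberg :: ('g::t2_space \<Rightarrow> 'k::field) set)"
proof -
  have cl: "closed K" using assms(1) by (rule compact_imp_closed)
  have "locally_constant_on UNIV (\<lambda>x::'g. if x \<in> K then a else (0::'k))"
    by (rule lc_clopen_if[OF assms(2) cl lc_const lc_const])
  moreover have "compact {x. (if x \<in> K then a else 0) \<noteq> 0}"
  proof (cases "a = 0")
    case True then show ?thesis by simp
  next
    case False
    then have "{x. (if x \<in> K then a else 0) \<noteq> 0} = K" by auto
    then show ?thesis using assms(1) by simp
  qed
  ultimately show ?thesis by (simp add: st_iff)
qed

lemma st_indicator:
  assumes "compact K" "open K"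
  shows "(indicator K :: 'g::t2_space \<Rightarrow> 'k::field) \<in> steinberg"
proof -
  have "(indicator K :: 'g \<Rightarrow> 'k) = (\<lambda>x. if x \<in> K then 1 else 0)" by (auto simp: indicator_def)
  then show ?thesis using st_ind[OF assms, of 1] by simp
qed

lemma st_restrict:
  assumes "f \<in> steinberg" "open C" "closed C"
  shows "(\<lambda>x. if x \<in> C then f x else 0) \<in> (steinberg :: ('g::t2_space \<Rightarrow> 'k::field) set)"
proof -
  have lf: "locally_constant_on UNIV f" and cf: "compact {x. f x \<noteq> 0}" using assms(1) by (auto simp: st_iff)
  have "locally_constant_on UNIV (\<lambda>x. if x \<in> C then f x else 0)"
    by (rule lc_clopen_if[OF assms(2,3) lf lc_const])
  moreover have "{x. (if x \<in> C then f x else 0) \<noteq> 0} = {x. f x \<noteq> 0} \<inter> C" by auto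
  ultimately show ?thesis using cf assms(3) by (simp add: st_iff compact_Int_closed)
qed

lemma st_comb:
  assumes "f \<in> steinberg" "g \<in> steinberg" "\<And>x. F 0 0 = (0::'k)"
  shows "(\<lambda>x. F (f x) (g x)) \<in> (steinberg :: ('g::t2_space \<Rightarrow> 'k::field) set)"
proof -
  have lf: "locally_constant_on UNIV f" and cf: "compact {x. f x \<noteq> 0}" using assms(1) by (auto simp: st_iff)
  have lg: "locally_constant_on UNIV g" and cg: "compact {x. g x \<noteq> 0}" using assms(2) by (auto simp: st_iff)
  have l: "locally_constant_on UNIV (\<lambda>x. F (f x) (g x))" by (rule lc_comb[OF lf lg])
  have "closed {x. F (f x) (g x) \<noteq> 0}" by (rule lc_closed_nz[OF l])
  moreover have "{x. F (f x) (g x) \<noteq> 0} \<subseteq> {x. f x \<noteq> 0} \<union> {x. g x \<noteq> 0}" using assms(3) by auto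
  ultimately have "compact {x. F (f x) (g x) \<noteq> 0}"
    using compact_closed_sub[OF compact_Un[OF cf cg]] by blast
  then show ?thesis using l by (simp add: st_iff)
qed

lemma st_add: "f \<in> steinberg \<Longrightarrow> g \<in> steinberg \<Longrightarrow> (\<lambda>x. f x + g x) \<in> (steinberg :: ('g::t2_space \<Rightarrow> 'k::field) set)"
  by (rule st_comb[where F="(+)"]) auto

lemma st_diff: "f \<in> steinberg \<Longrightarrow> g \<in> steinberg \<Longrightarrow> (\<lambda>x. f x - g x) \<in> (steinberg :: ('g::t2_space \<Rightarrow> 'k::field) set)"
  by (rule st_comb[where F="(-)"]) auto

lemma st_zero: "(\<lambda>x. 0) \<in> (steinberg :: ('g::t2_space \<Rightarrow> 'k::field) set)"
  by (simp add: st_iff lc_const)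

lemma st_sum:
  assumes "finite A" "\<And>a. a \<in> A \<Longrightarrow> F a \<in> steinberg"
  shows "(\<lambda>x. \<Sum>a\<in>A. F a x) \<in> (steinberg :: ('g::t2_space \<Rightarrow> 'k::field) set)"
  using assms
proof (induction A rule: finite_induct)
  case empty then show ?case by (simp add: st_zero)
next
  case (insert a A)
  have "(\<lambda>x. F a x + (\<Sum>a\<in>A. F a x)) \<in> (steinberg :: ('g \<Rightarrow> 'k) set)"
    using insert by (intro st_add) auto
  then show ?case using insert by simp
qed

lemma conv_single:
  assumes "\<And>a b. s a = r b \<Longrightarrow> m a b = x \<Longrightarrow> f a \<noteq> 0 \<Longrightarrow> g b \<noteq> 0 \<Longrightarrow> a = a0 \<and> b = b0"
  shows "twisted_conv r s m \<sigma> f g x = (if s a0 = r b0 \<and> m a0 b0 = x then \<sigma> a0 b0 * f a0 * g b0 else 0)"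
proof -
  let ?P = "{(a, b). s a = r b \<and> m a b = x \<and> f a \<noteq> 0 \<and> g b \<noteq> 0}"
  have sub: "?P \<subseteq> {(a0, b0)}" using assms by auto
  have def: "twisted_conv r s m \<sigma> f g x = (\<Sum>(a, b)\<in>?P. \<sigma> a b * f a * g b)"
    unfolding twisted_conv_def by (rule refl)
  show ?thesis
  proof (cases "(a0, b0) \<in> ?P")
    case True
    then have e: "?P = {(a0, b0)}" using sub by blast
    have "(\<Sum>(a, b)\<in>?P. \<sigma> a b * f a * g b) = (\<Sum>(a, b)\<in>{(a0, b0)}. \<sigma> a b * f a * g b)"
      by (rule sum.cong[OF e refl])
    then have "twisted_conv r s m \<sigma> f g x = \<sigma> a0 b0 * f a0 * g b0" using def by simp
    moreover have "s a0 = r b0 \<and> m a0 b0 = x" using True by blast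
    ultimately show ?thesis by simp
  next
    case False
    then have e: "?P = {}" using sub by blast
    have "(\<Sum>(a, b)\<in>?P. \<sigma> a b * f a * g b) = (\<Sum>(a, b)\<in>{}. \<sigma> a b * f a * g b)"
      by (rule sum.cong[OF e refl])
    then have "twisted_conv r s m \<sigma> f g x = 0" using def by simp
    moreover have "s a0 = r b0 \<and> m a0 b0 = x \<Longrightarrow> \<sigma> a0 b0 * f a0 * g b0 = 0"
      using False by auto
    ultimately show ?thesis by simp
  qed
qed

lemma conv_none:
  assumes "\<And>a b. s a = r b \<Longrightarrow> m a b = x \<Longrightarrow> f a \<noteq> 0 \<Longrightarrow> g b \<noteq> 0 \<Longrightarrow> False"
  shows "twisted_conv r s m \<sigma> f g x = 0"
proof -
  have e: "{(a, b). s a = r b \<and> m a b = x \<and> f a \<noteq> 0 \<and> g b \<noteq> 0} = {}" using assms by auto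
  have "(\<Sum>(a, b)\<in>{(a, b). s a = r b \<and> m a b = x \<and> f a \<noteq> 0 \<and> g b \<noteq> 0}. \<sigma> a b * f a * g b) = (\<Sum>(a, b)\<in>{}. \<sigma> a b * f a * g b)"
    by (rule sum.cong[OF e refl])
  moreover have "twisted_conv r s m \<sigma> f g x = (\<Sum>(a, b)\<in>{(a, b). s a = r b \<and> m a b = x \<and> f a \<noteq> 0 \<and> g b \<noteq> 0}. \<sigma> a b * f a * g b)"
    unfolding twisted_conv_def by (rule refl)
  ultimately show ?thesis by simp
qed

context gsetup begin

lemma pi_add: "f \<in> steinberg \<Longrightarrow> g \<in> steinberg \<Longrightarrow> \<pi> (\<lambda>x. f x + g x) = \<pi> f + \<pi> g"
  using GH unfolding graded_ring_hom_def by blast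
lemma pi_mult: "f \<in> steinberg \<Longrightarrow> g \<in> steinberg \<Longrightarrow> \<pi> (twisted_conv r s m \<sigma> f g) = \<pi> f * \<pi> g"
  using GH unfolding graded_ring_hom_def by blast
lemma pi_grade: "f \<in> steinberg_hom_component c \<gamma> \<Longrightarrow> \<pi> f \<in> Qg \<gamma>"
  using GH unfolding graded_ring_hom_def by blast

lemma pi_zero: "\<pi> (\<lambda>x. 0) = 0"
proof -
  have "\<pi> (\<lambda>x. 0 + 0) = \<pi> (\<lambda>x. 0) + \<pi> (\<lambda>x. 0)" by (rule pi_add[OF st_zero st_zero])
  then show ?thesis by simp
qed

lemma pi_sum:
  assumes "finite A" "\<And>a. a \<in> A \<Longrightarrow> F a \<in> steinberg"
  shows "\<pi> (\<lambda>x. \<Sum>a\<in>A. F a x) = (\<Sum>a\<in>A. \<pi> (F a))"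
  using assms
proof (induction A rule: finite_induct)
  case empty then show ?case by (simp add: pi_zero)
next
  case (insert a A)
  have "\<pi> (\<lambda>x. F a x + (\<Sum>a\<in>A. F a x)) = \<pi> (F a) + \<pi> (\<lambda>x. \<Sum>a\<in>A. F a x)"
    using insert by (intro pi_add st_sum) auto
  then show ?case using insert by simp
qed

lemma sigma_nz: "s a = r b \<Longrightarrow> \<sigma> a b \<noteq> 0"
  using CC unfolding cont_2cocycle_def comp_pairs_def by blast
lemma sigma_r: "\<sigma> (r x) x = 1" using CC unfolding cont_2cocycle_def by blast
lemma sigma_s: "\<sigma> x (s x) = 1" using CC unfolding cont_2cocycle_def by blast
lemma sigma_lc: "locally_constant_on (comp_pairs r s) (\<lambda>(a, b). \<sigma> a b)"
  using CC unfolding cont_2cocycle_def by blast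

end


context gsetup begin

lemma open_vimage_UNIV: "continuous_on UNIV f \<Longrightarrow> open W \<Longrightarrow> open (f -` W)"
  using continuous_on_open_vimage[of UNIV f] by auto

lemma closed_vimage_UNIV: "continuous_on UNIV f \<Longrightarrow> closed W \<Longrightarrow> closed (f -` W)"
  using continuous_on_closed_vimage[of UNIV f] by auto

lemma shrink:
  assumes B: "open_bisection r s B" "B \<subseteq> c -` {0}" "B \<inter> unit_space r = {}"
    and V: "open V" "V \<noteq> {}" "V \<subseteq> unit_space r"
  shows "\<exists>V'. open V' \<and> V' \<noteq> {} \<and> V' \<subseteq> V \<and> (\<forall>b\<in>B. \<not> (r b \<in> V' \<and> s b \<in> V'))"
proof (cases "\<forall>b\<in>B. r b \<in> V \<longrightarrow> r b = s b")
  case True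
  let ?H = "c -` {0}"
  let ?O = "B \<inter> r -` V"
  have oO: "open ?O" using bis_open[OF B(1)] open_vimage_UNIV[OF r_cont V(1)] by blast
  have "openin (top_of_set ?H) ?O"
    unfolding openin_open using oO B(2) by blast
  moreover have "?O \<subseteq> {x \<in> ?H. r x = s x}" using True B(2) by blast
  ultimately have "?O \<subseteq> interior_in ?H {x \<in> ?H. r x = s x}"
    unfolding interior_in_def by blast
  then have "?O \<subseteq> ?H \<inter> unit_space r" using EF unfolding effective_sub_def by simp
  then have "?O = {}" using B(3) by blast
  then have nb: "\<forall>b\<in>B. \<not> (r b \<in> V \<and> s b \<in> V)" by blast
  show ?thesis by (rule exI[of _ V]) (simp add: V(1,2) nb)
next
  case False
  then obtain b where b: "b \<in> B" "r b \<in> V" "r b \<noteq> s b" by blast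
  obtain W1 W2 where W: "open W1" "open W2" "r b \<in> W1" "s b \<in> W2" "W1 \<inter> W2 = {}"
    using separation_t2[of "r b" "s b"] b(3) by blast
  obtain g where g: "homeomorphism B (r ` B) r g" using bis_hom[OF B(1)] by metis
  have gcont: "continuous_on (r ` B) g" and gr: "\<forall>x\<in>B. g (r x) = x"
    using g unfolding homeomorphism_def by blast+
  have "open (g -` (s -` W2) \<inter> r ` B)"
    using gcont r_img_open[OF B(1)] open_vimage_UNIV[OF s_cont W(2)] continuous_on_open_vimage by blast
  define V' where "V' = V \<inter> W1 \<inter> (g -` (s -` W2) \<inter> r ` B)"
  have oV': "open V'" unfolding V'_def using V(1) W(1) \<open>open (g -` (s -` W2) \<inter> r ` B)\<close> by blast
  have "r b \<in> V'" unfolding V'_def using b W gr by auto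
  moreover have "\<forall>b'\<in>B. \<not> (r b' \<in> V' \<and> s b' \<in> V')"
  proof (intro ballI notI)
    fix b' assume b': "b' \<in> B" "r b' \<in> V' \<and> s b' \<in> V'"
    then have "s (g (r b')) \<in> W2" unfolding V'_def by blast
    then have "s b' \<in> W2" using gr b'(1) by simp
    moreover have "s b' \<in> W1" using b'(2) unfolding V'_def by blast
    ultimately show False using W(5) by blast
  qed
  moreover have "V' \<subseteq> V" unfolding V'_def by blast
  ultimately show ?thesis using oV' by blast
qed

lemma shrink_finite:
  assumes "finite \<B>" "\<And>B. B \<in> \<B> \<Longrightarrow> open_bisection r s B \<and> B \<subseteq> c -` {0} \<and> B \<inter> unit_space r = {}"
    and "open V0" "V0 \<noteq> {}" "V0 \<subseteq> unit_space r"
  shows "\<exists>V. open V \<and> V \<noteq> {} \<and> V \<subseteq> V0 \<and> (\<forall>B\<in>\<B>. \<forall>b\<in>B. \<not> (r b \<in> V \<and> s b \<in> V))"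
  using assms
proof (induction \<B> rule: finite_induct)
  case empty then show ?case by blast
next
  case (insert B \<B>)
  then obtain V where V: "open V" "V \<noteq> {}" "V \<subseteq> V0" "\<forall>B\<in>\<B>. \<forall>b\<in>B. \<not> (r b \<in> V \<and> s b \<in> V)"
    by blast
  have Bp: "open_bisection r s B" "B \<subseteq> c -` {0}" "B \<inter> unit_space r = {}" using insert.prems(1) by blast+
  have VU: "V \<subseteq> unit_space r" using V(3) insert.prems(4) by (rule subset_trans)
  obtain V' where V': "open V'" "V' \<noteq> {}" "V' \<subseteq> V" "\<forall>b\<in>B. \<not> (r b \<in> V' \<and> s b \<in> V')"
    using shrink[OF Bp V(1) V(2) VU] by blast
  have nb: "\<forall>B'\<in>insert B \<B>. \<forall>b\<in>B'. \<not> (r b \<in> V' \<and> s b \<in> V')"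
  proof (intro ballI notI)
    fix B' b assume B': "B' \<in> insert B \<B>" "b \<in> B'" "r b \<in> V' \<and> s b \<in> V'"
    show False
    proof (cases "B' = B")
      case True then show False using B' V'(4) by blast
    next
      case False
      then have "B' \<in> \<B>" using B'(1) by blast
      moreover have "r b \<in> V" "s b \<in> V" using B'(3) V'(3) by blast+
      ultimately show False using V(4) B'(2) by blast
    qed
  qed
  have V'V0: "V' \<subseteq> V0" using V'(3) V(3) by (rule subset_trans)
  show ?case by (rule exI[of _ V']) (intro conjI V'(1) V'(2) V'V0 nb)
qed

end


context gsetup begin

lemma main_lemma:
  assumes hst: "h \<in> steinberg" and hpi: "\<pi> h = 0"
    and hhom: "\<And>x. h x \<noteq> 0 \<Longrightarrow> c x = c y" and hy: "h y \<noteq> 0"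
  shows "\<exists>K. K \<subseteq> unit_space r \<and> K \<noteq> {} \<and> compact K \<and> open K \<and> \<pi> (indicator K) = 0"
proof -
  define a1 where "a1 = i y"
  have hlc: "locally_constant_on UNIV h" and hcp: "compact {x. h x \<noteq> 0}" using hst by (auto simp: st_iff)
  define O1 where "O1 = c -` {c a1}"
  define O2 where "O2 = {a. h (i a) = h y}"
  define O3 where "O3 = {a. \<sigma> a (i a) = \<sigma> a1 y}"
  have oO1: "open O1" unfolding O1_def by (rule c_fib_open)
  have "locally_constant_on UNIV (\<lambda>a. h (i a))"
    by (rule lc_compose[OF hlc i_cont]) simp
  then have oO2: "open O2" unfolding O2_def by (rule lc_open_fiber)
  have "locally_constant_on UNIV (\<lambda>a. (\<lambda>(a, b). \<sigma> a b) (a, i a))"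
    by (rule lc_compose[OF sigma_lc]) (auto intro!: continuous_intros i_cont simp: comp_pairs_def r_i)
  then have "locally_constant_on UNIV (\<lambda>a. \<sigma> a (i a))" by simp
  then have oO3: "open O3" unfolding O3_def by (rule lc_open_fiber)
  have a1O: "a1 \<in> O1 \<inter> O2 \<inter> O3" unfolding O1_def O2_def O3_def a1_def by (simp add: i_i)
  obtain D where D: "compact D" "open_bisection r s D" "a1 \<in> D" "D \<subseteq> O1 \<inter> O2 \<inter> O3"
    using basisE[of "O1 \<inter> O2 \<inter> O3" a1] oO1 oO2 oO3 a1O by blast
  have oD: "open D" by (rule bis_open[OF D(2)])
  obtain gD where gD: "homeomorphism D (r ` D) r gD" using bis_hom[OF D(2)] by metis
  have gDr: "\<And>x. x \<in> D \<Longrightarrow> gD (r x) = x" and rgD: "\<And>v. v \<in> r ` D \<Longrightarrow> r (gD v) = v"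
    and gDin: "\<And>v. v \<in> r ` D \<Longrightarrow> gD v \<in> D"
    using gD unfolding homeomorphism_def by auto
  define lam where "lam = \<sigma> a1 y * h y"
  have lam_nz: "lam \<noteq> 0" unfolding lam_def a1_def using sigma_nz[of "i y" y] hy by (simp add: s_i)
  define S where "S = {x. h x \<noteq> 0}"
  define P where "P = (D \<times> S) \<inter> comp_pairs r s"
  have cP: "compact P" unfolding P_def using compact_Times[OF D(1) hcp[folded S_def]] cp_closed by blast
  have "continuous_on P (\<lambda>(a, b). m a b)"
    by (rule continuous_on_subset[OF m_cont]) (auto simp: P_def)
  then have cimg: "compact ((\<lambda>(a, b). m a b) ` P)" using cP by (rule compact_continuous_image)
  define M where "M = (\<lambda>(a, b). m a b) ` P \<inter> - unit_space r"
  have cM: "compact M" unfolding M_def using cimg closed_Compl[OF U0_open] by blast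
  define OE where "OE = c -` {0} - unit_space r"
  have oOE: "open OE" unfolding OE_def using c_fib_open U0_closed by blast
  have MOE: "M \<subseteq> OE"
  proof
    fix x assume "x \<in> M"
    then obtain a b where ab: "a \<in> D" "b \<in> S" "s a = r b" "x = m a b" "x \<notin> unit_space r"
      unfolding M_def P_def comp_pairs_def by auto
    have "c a = c a1" using ab(1) D(4) unfolding O1_def by auto
    moreover have "c b = c y" using ab(2) hhom unfolding S_def by auto
    ultimately have "c x = c (i y) + c y" using c_m[OF ab(3)] ab(4) a1_def by simp
    then have "c x = 0" using c_inv by simp
    then show "x \<in> OE" using ab(5) unfolding OE_def by simp
  qed
  define T where "T = {B. compact B \<and> open_bisection r s B \<and> B \<subseteq> OE}"
  have MT: "M \<subseteq> \<Union>T"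
  proof
    fix x assume "x \<in> M"
    then have "x \<in> OE" using MOE by blast
    then obtain B where "compact B" "open_bisection r s B" "x \<in> B" "B \<subseteq> OE"
      using basisE[OF oOE] by metis
    then show "x \<in> \<Union>T" unfolding T_def by blast
  qed
  have "\<And>B. B \<in> T \<Longrightarrow> open B" unfolding T_def using bis_open by blast
  then obtain T' where T': "T' \<subseteq> T" "finite T'" "M \<subseteq> \<Union>T'"
    using compactE[OF cM MT] by metis
  define V0 where "V0 = r ` D"
  have oV0: "open V0" unfolding V0_def by (rule r_img_open[OF D(2)])
  have neV0: "V0 \<noteq> {}" unfolding V0_def using D(3) by blast
  have V0U: "V0 \<subseteq> unit_space r" unfolding V0_def unit_space_def by (auto simp: r_r)
  have T'p: "\<And>B. B \<in> T' \<Longrightarrow> open_bisection r s B \<and> B \<subseteq> c -` {0} \<and> B \<inter> unit_space r = {}"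
    using T'(1) unfolding T_def OE_def by blast
  obtain V where V: "open V" "V \<noteq> {}" "V \<subseteq> V0" "\<forall>B\<in>T'. \<forall>b\<in>B. \<not> (r b \<in> V \<and> s b \<in> V)"
    using shrink_finite[OF T'(2) T'p oV0 neV0 V0U] by blast
  obtain v where v: "v \<in> V" using V(2) by blast
  obtain K where K: "compact K" "open_bisection r s K" "v \<in> K" "K \<subseteq> V"
    using basisE[OF V(1) v] by metis
  have oK: "open K" by (rule bis_open[OF K(2)])
  have clK: "closed K" using K(1) by (rule compact_imp_closed)
  have KU: "K \<subseteq> unit_space r" using K(4) V(3) V0U by blast
  have Kunit: "\<And>x. x \<in> K \<Longrightarrow> r x = x" using KU unfolding unit_space_def by blast
  have KV0: "K \<subseteq> r ` D" using K(4) V(3) unfolding V0_def by blast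

  define h' where "h' = (\<lambda>x. if x \<in> s -` K then h x else 0)"
  have h'st: "h' \<in> steinberg" unfolding h'_def
    by (rule st_restrict[OF hst open_vimage_UNIV[OF s_cont oK] closed_vimage_UNIV[OF s_cont clK]])
  have indK: "indicator K \<in> steinberg" by (rule st_indicator[OF K(1) oK])
  have conv1: "twisted_conv r s m \<sigma> h (indicator K) = h'"
  proof
    fix x
    have "twisted_conv r s m \<sigma> h (indicator K) x
        = (if s x = r (s x) \<and> m x (s x) = x then \<sigma> x (s x) * h x * indicator K (s x) else 0)"
    proof (rule conv_single)
      fix a b assume ab: "s a = r b" "m a b = x" "h a \<noteq> 0" "indicator K b \<noteq> (0::'k)"
      then have "b \<in> K" by (auto simp: indicator_def split: if_splits)
      then have "r b = b" by (rule Kunit)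
      then have "m a b = a" using ab(1) by (simp add: unit_right)
      then show "a = x \<and> b = s x" using ab(1,2) \<open>r b = b\<close> by simp
    qed
    also have "\<dots> = h' x" unfolding h'_def by (simp add: r_s m_s sigma_s indicator_def)
    finally show "twisted_conv r s m \<sigma> h (indicator K) x = h' x" .
  qed
  have pih': "\<pi> h' = 0" using pi_mult[OF hst indK] conv1 hpi by simp

  define D' where "D' = D \<inter> r -` K"
  have cD': "compact D'" unfolding D'_def using D(1) closed_vimage_UNIV[OF r_cont clK] by blast
  have oD': "open D'" unfolding D'_def using oD open_vimage_UNIV[OF r_cont oK] by blast
  have indD': "indicator D' \<in> steinberg" by (rule st_indicator[OF cD' oD'])
  define F where "F = twisted_conv r s m \<sigma> (indicator D') h'"
  have piF: "\<pi> F = 0" unfolding F_def using pi_mult[OF indD' h'st] pih' by simp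
  have Feq: "F = (\<lambda>x. if x \<in> K then lam else 0)"
  proof
    fix x
    show "F x = (if x \<in> K then lam else 0)"
    proof (cases "x \<in> K")
      case True
      have xu: "r x = x" using True by (rule Kunit)
      have xD: "x \<in> r ` D" using True KV0 by blast
      define a0 where "a0 = gD x"
      have a0D: "a0 \<in> D" and ra0: "r a0 = x" unfolding a0_def using gDin[OF xD] rgD[OF xD] by auto
      have "F x = (if s a0 = r (i a0) \<and> m a0 (i a0) = x then \<sigma> a0 (i a0) * indicator D' a0 * h' (i a0) else 0)"
        unfolding F_def
      proof (rule conv_single)
        fix a b assume ab: "s a = r b" "m a b = x" "indicator D' a \<noteq> (0::'k)" "h' b \<noteq> 0"
        have aD: "a \<in> D" using ab(3) unfolding D'_def by (auto simp: indicator_def split: if_splits)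
        have "b = i a" by (rule cancel_inv[OF ab(1)]) (simp add: ab(2) xu)
        moreover have "r a = x" using r_m[OF ab(1)] ab(2) xu by simp
        then have "a = a0" unfolding a0_def using gDr[OF aD] by simp
        ultimately show "a = a0 \<and> b = i a0" by simp
      qed
      also have "\<dots> = \<sigma> a0 (i a0) * indicator D' a0 * h' (i a0)"
        by (simp add: r_i m_i_r ra0)
      also have "\<dots> = lam"
      proof -
        have "\<sigma> a0 (i a0) = \<sigma> a1 y" using a0D D(4) unfolding O3_def by blast
        moreover have "indicator D' a0 = (1::'k)" using a0D ra0 True unfolding D'_def by (simp add: indicator_def)
        moreover have "h' (i a0) = h y"
        proof -
          have "s (i a0) \<in> K" using ra0 True by (simp add: s_i)
          then have "h' (i a0) = h (i a0)" unfolding h'_def by simp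
          also have "\<dots> = h y" using a0D D(4) unfolding O2_def by blast
          finally show ?thesis .
        qed
        ultimately show ?thesis unfolding lam_def by simp
      qed
      finally show ?thesis using True by simp
    next
      case False
      have "F x = 0" unfolding F_def
      proof (rule conv_none)
        fix a b assume ab: "s a = r b" "m a b = x" "indicator D' a \<noteq> (0::'k)" "h' b \<noteq> 0"
        have aD: "a \<in> D" and raK: "r a \<in> K" using ab(3) unfolding D'_def by (auto simp: indicator_def split: if_splits)
        have sbK: "s b \<in> K" and hb: "h b \<noteq> 0" using ab(4) unfolding h'_def by (auto split: if_splits)
        have rx: "r x \<in> K" using r_m[OF ab(1)] ab(2) raK by simp
        have sx: "s x \<in> K" using s_m[OF ab(1)] ab(2) sbK by simp
        show False
        proof (cases "r x = x")
          case True then show False using rx False by simp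
        next
          case nu: False
          have "(a, b) \<in> P" unfolding P_def S_def comp_pairs_def using aD hb ab(1) by simp
          then have "x \<in> M" unfolding M_def unit_space_def using ab(2) nu by force
          then obtain B where B: "B \<in> T'" "x \<in> B" using T'(3) by blast
          have "r x \<in> V" "s x \<in> V" using rx sx K(4) by blast+
          then show False using V(4) B by blast
        qed
      qed
      then show ?thesis using False by simp
    qed
  qed
  have Fst: "F \<in> steinberg" unfolding Feq by (rule st_ind[OF K(1) oK])
  define L where "L = (\<lambda>x. if x \<in> K then inverse lam else 0)"
  have Lst: "L \<in> steinberg" unfolding L_def by (rule st_ind[OF K(1) oK])
  have conv3: "twisted_conv r s m \<sigma> L F = indicator K"
  proof
    fix x
    have "twisted_conv r s m \<sigma> L F x = (if s x = r x \<and> m x x = x then \<sigma> x x * L x * F x else 0)"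
    proof (rule conv_single)
      fix a b assume ab: "s a = r b" "m a b = x" "L a \<noteq> 0" "F b \<noteq> 0"
      have aK: "a \<in> K" using ab(3) unfolding L_def by (auto split: if_splits)
      have bK: "b \<in> K" using ab(4) unfolding Feq by (auto split: if_splits)
      have "r b = b" using bK by (rule Kunit)
      moreover have "s a = a" using Kunit[OF aK] by (rule unit_s)
      ultimately have "a = b" using ab(1) by simp
      moreover have "m a a = a" using Kunit[OF aK] \<open>s a = a\<close> by (simp add: unit_left)
      ultimately show "a = x \<and> b = x" using ab(2) by simp
    qed
    also have "\<dots> = indicator K x"
    proof (cases "x \<in> K")
      case True
      have xu: "r x = x" using True by (rule Kunit)
      have sx: "s x = x" using xu by (rule unit_s)
      have mx: "m x x = x" using xu sx by (simp add: unit_left)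
      have "\<sigma> x x = 1" using sigma_r[of x] xu by simp
      then show ?thesis using True xu sx mx lam_nz unfolding L_def Feq by (simp add: indicator_def)
    next
      case False then show ?thesis unfolding L_def Feq by (simp add: indicator_def)
    qed
    finally show "twisted_conv r s m \<sigma> L F x = indicator K x" .
  qed
  have "\<pi> (indicator K) = 0" using pi_mult[OF Lst Fst] conv3 piF by simp
  then show ?thesis using KU K(1,3) oK by blast
qed

end


context gsetup begin

lemma backward:
  assumes H: "\<forall>K. K \<subseteq> unit_space r \<and> K \<noteq> {} \<and> compact K \<and> openin (top_of_set (unit_space r)) K
         \<longrightarrow> \<pi> (indicator K) \<noteq> 0"
  shows "inj_on \<pi> steinberg"
proof (rule inj_onI, rule ccontr)
  fix f g assume f: "f \<in> steinberg" and g: "g \<in> steinberg" and fg: "\<pi> f = \<pi> g" and ne: "f \<noteq> g"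
  obtain y where y: "f y \<noteq> g y" using ne by blast
  define h where "h = (\<lambda>x. f x - g x)"
  have hst: "h \<in> steinberg" unfolding h_def by (rule st_diff[OF f g])
  have "f = (\<lambda>x. h x + g x)" unfolding h_def by simp
  then have "\<pi> f = \<pi> h + \<pi> g" using pi_add[OF hst g] by simp
  then have hpi: "\<pi> h = 0" using fg by simp
  have hy: "h y \<noteq> 0" unfolding h_def using y by simp
  define S where "S = {x. h x \<noteq> 0}"
  have cS: "compact S" using hst unfolding S_def by (simp add: st_iff)
  define G0 where "G0 = c ` S"
  have "finite G0"
  proof -
    have "S \<subseteq> (\<Union>\<gamma>\<in>G0. c -` {\<gamma>})" unfolding G0_def by blast
    then obtain C' where C': "C' \<subseteq> G0" "finite C'" "S \<subseteq> (\<Union>\<gamma>\<in>C'. c -` {\<gamma>})"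
      using compactE_image[OF cS, of G0 "\<lambda>\<gamma>. c -` {\<gamma>}"] c_fib_open by metis
    have "G0 \<subseteq> C'" unfolding G0_def using C'(3) by blast
    then show ?thesis using C'(2) finite_subset by blast
  qed
  define hg where "hg = (\<lambda>\<gamma> x. if x \<in> c -` {\<gamma>} then h x else 0)"
  have hgst: "\<And>\<gamma>. hg \<gamma> \<in> steinberg" unfolding hg_def
    by (rule st_restrict[OF hst c_fib_open c_fib_closed])
  have hgcomp: "\<And>\<gamma>. hg \<gamma> \<in> steinberg_hom_component c \<gamma>"
    unfolding steinberg_hom_component_def using hgst unfolding hg_def by auto
  have hsum: "h = (\<lambda>x. \<Sum>\<gamma>\<in>G0. hg \<gamma> x)"
  proof
    fix x
    show "h x = (\<Sum>\<gamma>\<in>G0. hg \<gamma> x)"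
    proof (cases "h x = 0")
      case True
      have "\<forall>\<gamma>\<in>G0. hg \<gamma> x = 0" unfolding hg_def using True by simp
      then have "(\<Sum>\<gamma>\<in>G0. hg \<gamma> x) = 0" by (rule sum.neutral)
      then show ?thesis using True by simp
    next
      case False
      then have "c x \<in> G0" unfolding G0_def S_def by blast
      have "(\<Sum>\<gamma>\<in>G0. hg \<gamma> x) = (\<Sum>\<gamma>\<in>G0. if c x = \<gamma> then h x else 0)"
        unfolding hg_def by simp
      also have "\<dots> = h x" using \<open>c x \<in> G0\<close> \<open>finite G0\<close> by (simp add: sum.delta)
      finally show ?thesis by simp
    qed
  qed
  have sum0: "(\<Sum>\<gamma>\<in>G0. \<pi> (hg \<gamma>)) = 0"
    using pi_sum[OF \<open>finite G0\<close>, of hg] hgst hsum hpi by simp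
  define Hh where "Hh = (\<lambda>\<gamma>. \<pi> (hg \<gamma>))"
  have zero_out: "\<And>\<gamma>. \<gamma> \<notin> G0 \<Longrightarrow> Hh \<gamma> = 0"
  proof -
    fix \<gamma> assume "\<gamma> \<notin> G0"
    then have "hg \<gamma> = (\<lambda>x. 0)" unfolding hg_def G0_def S_def by (auto simp: fun_eq_iff)
    then show "Hh \<gamma> = 0" unfolding Hh_def by (simp add: pi_zero)
  qed
  have supp: "{\<gamma>. Hh \<gamma> \<noteq> 0} \<subseteq> G0" using zero_out by blast
  define Pr where "Pr = (\<lambda>hh::'c \<Rightarrow> 'q. finite {\<gamma>. hh \<gamma> \<noteq> 0} \<and> (\<forall>\<gamma>. hh \<gamma> \<in> Qg \<gamma>) \<and>
           0 = (\<Sum>\<gamma>\<in>{\<gamma>. hh \<gamma> \<noteq> 0}. hh \<gamma>))"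
  have uniq: "\<exists>!hh. Pr hh"
    using GR unfolding graded_ring_def Pr_def by blast
  have P1: "Pr Hh" unfolding Pr_def
  proof (intro conjI)
    show "finite {\<gamma>. Hh \<gamma> \<noteq> 0}" using supp \<open>finite G0\<close> finite_subset by blast
    show "\<forall>\<gamma>. Hh \<gamma> \<in> Qg \<gamma>" unfolding Hh_def using hgcomp pi_grade by blast
    have "(\<Sum>\<gamma>\<in>{\<gamma>. Hh \<gamma> \<noteq> 0}. Hh \<gamma>) = (\<Sum>\<gamma>\<in>G0. Hh \<gamma>)"
      by (rule sum.mono_neutral_left[OF \<open>finite G0\<close> supp]) blast
    then show "0 = (\<Sum>\<gamma>\<in>{\<gamma>. Hh \<gamma> \<noteq> 0}. Hh \<gamma>)" using sum0 unfolding Hh_def by simp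
  qed
  have P2: "Pr (\<lambda>_. 0)"
    using GR unfolding graded_ring_def Pr_def by simp
  have "Hh = (\<lambda>_. 0)" using uniq P1 P2 by blast
  then have pihg: "\<pi> (hg (c y)) = 0" unfolding Hh_def by (metis)
  have "\<exists>K. K \<subseteq> unit_space r \<and> K \<noteq> {} \<and> compact K \<and> open K \<and> \<pi> (indicator K) = 0"
  proof (rule main_lemma[OF hgst pihg])
    show "\<And>x. hg (c y) x \<noteq> 0 \<Longrightarrow> c x = c y" unfolding hg_def by (auto split: if_splits)
    show "hg (c y) y \<noteq> 0" unfolding hg_def using hy by simp
  qed
  then obtain K where K: "K \<subseteq> unit_space r" "K \<noteq> {}" "compact K" "open K" "\<pi> (indicator K) = 0" by blast
  have e: "unit_space r \<inter> K = K" using K(1) by blast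
  have "openin (top_of_set (unit_space r)) (unit_space r \<inter> K)" by (rule openin_open_Int[OF K(4)])
  then have "openin (top_of_set (unit_space r)) K" by (simp only: e)
  then show False using H K by blast
qed

lemma forward:
  assumes inj: "inj_on \<pi> steinberg"
  shows "\<forall>K. K \<subseteq> unit_space r \<and> K \<noteq> {} \<and> compact K \<and> openin (top_of_set (unit_space r)) K
         \<longrightarrow> \<pi> (indicator K) \<noteq> 0"
proof (intro allI impI notI)
  fix K assume K: "K \<subseteq> unit_space r \<and> K \<noteq> {} \<and> compact K \<and> openin (top_of_set (unit_space r)) K"
    and z: "\<pi> (indicator K) = 0"
  have oK: "open K" using K U0_open openin_open_trans by blast
  have st: "indicator K \<in> steinberg" using st_indicator[OF _ oK] K by blast
  have "\<pi> (indicator K) = \<pi> (\<lambda>x. 0)" using z pi_zero by simp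
  then have "indicator K = (\<lambda>x. 0::'k)" using inj st st_zero unfolding inj_on_def by blast
  moreover obtain x where "x \<in> K" using K by blast
  ultimately show False by (metis indicator_simps(1) zero_neq_one)
qed

end

theorem theorem7p2:
  fixes r s :: "'g::t2_space \<Rightarrow> 'g" and m :: "'g \<Rightarrow> 'g \<Rightarrow> 'g" and i :: "'g \<Rightarrow> 'g"
    and \<sigma> :: "'g \<Rightarrow> 'g \<Rightarrow> 'k::field"
    and c :: "'g \<Rightarrow> 'c::group_add"
    and Qg :: "'c \<Rightarrow> 'q::ring set"
    and \<pi> :: "('g \<Rightarrow> 'k) \<Rightarrow> 'q"
  assumes "lch_top_groupoid r s m i"
    and "ample r s"
    and "cont_2cocycle r s m \<sigma>"
    and "cont_hom r s m c"
    and "effective_sub r s (c -` {0})"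
    and "graded_ring Qg"
    and "graded_ring_hom r s m \<sigma> c Qg \<pi>"
  shows "inj_on \<pi> steinberg \<longleftrightarrow>
    (\<forall>K. K \<subseteq> unit_space r \<and> K \<noteq> {} \<and> compact K \<and> openin (top_of_set (unit_space r)) K
         \<longrightarrow> \<pi> (indicator K) \<noteq> 0)"
proof -
  interpret gsetup r s m i \<sigma> c Qg \<pi>
    using assms by (unfold_locales) blast+
  show ?thesis using forward backward by blast
qed

end
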